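(* Let $\mathcal{A}$ be a ring with identity $1$ and let $a,d\in\mathcal{A}$. Suppose $a$ is Mary invertible along $d$, and let $t=(ad)^\sharp a$, where $(ad)^\sharp$ denotes the group inverse of $ad$. Then $dt$ and $1-td$ are idempotents and $a$ is Djordjevic–Wei $(p,q)$-invertible with $p=dt$ and $q=1-td$; i.e. there exists $b\in\mathcal{A}$ with $bab=b$, $ba=dt$ and $1-ab=1-td$.
   Context: For $x,y$ in $\mathcal{A}$, $x\mathcal{A}=y\mathcal{A}$ means $x=yz$ and $y=xz'$ for some $z,z'\in\mathcal{A}$; $\mathcal{A}x=\mathcal{A}y$ is defined analogously with left multiplication. $a$ is Mary invertible along $d$ if there exists $b\in\mathcal{A}$ with $bab=b$, $b\mathcal{A}=d\mathcal{A}$, $\mathcal{A}b=\mathcal{A}d$. The group inverse of $c\in\mathcal{A}$ is the (unique) $c^\sharp$ with $cc^\sharp c=c$, $c^\sharp cc^\sharp=c^\sharp$, $cc^\sharp=c^\sharp c$; it is known (Mary) that if $a$ is Mary invertible along $d$ then $ad$ is group invertible, so $t$ is well defined. Given idempotents $p,q\in\mathcal{A}$, $a$ is Djordjevic–Wei $(p,q)$-invertible if there exists $b\in\mathcal{A}$ with $bab=b$, $ba=p$, $1-ab=q$. *)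

theory Defs
  imports Main
begin

definition right_ideal_eq :: "'a::ring_1 \<Rightarrow> 'a \<Rightarrow> bool" where
  "right_ideal_eq x y \<longleftrightarrow> (\<exists>z z'. x = y * z \<and> y = x * z')"

definition left_ideal_eq :: "'a::ring_1 \<Rightarrow> 'a \<Rightarrow> bool" where
  "left_ideal_eq x y \<longleftrightarrow> (\<exists>z z'. x = z * y \<and> y = z' * x)"

definition mary_invertible_along :: "'a::ring_1 \<Rightarrow> 'a \<Rightarrow> bool" where
  "mary_invertible_along a d \<longleftrightarrow>
     (\<exists>b. b * a * b = b \<and> right_ideal_eq b d \<and> left_ideal_eq b d)"

definition is_group_inverse :: "'a::ring_1 \<Rightarrow> 'a \<Rightarrow> bool" where
  "is_group_inverse c x \<longleftrightarrow> c * x * c = c \<and> x * c * x = x \<and> c * x = x * c"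

definition group_inverse :: "'a::ring_1 \<Rightarrow> 'a" where
  "group_inverse c = (THE x. is_group_inverse c x)"

definition idempotent :: "'a::ring_1 \<Rightarrow> bool" where
  "idempotent e \<longleftrightarrow> e * e = e"

definition dw_invertible :: "'a::ring_1 \<Rightarrow> 'a \<Rightarrow> 'a \<Rightarrow> bool" where
  "dw_invertible a p q \<longleftrightarrow> (\<exists>b. b * a * b = b \<and> b * a = p \<and> 1 - a * b = q)"

end

theory Submission
  imports Defs
begin

lemma gi_unique:
  fixes c x y :: "'a::ring_1"
  assumes "is_group_inverse c x" "is_group_inverse c y"
  shows "x = y"
proof -
  have x1: "c*x*c = c" "x*c*x = x" "c*x = x*c" and y1: "c*y*c = c" "y*c*y = y" "c*y = y*c"
    using assms unfolding is_group_inverse_def by auto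
  have "c*x = y*c"
  proof -
    have "c*x = (c*y*c)*x" using y1 by simp
    also have "... = (y*c*c)*x" using y1(3) by simp
    also have "... = y*(c*(c*x))" by (simp add: mult.assoc)
    also have "c*(c*x) = c*x*c" by (metis x1(3) mult.assoc)
    also have "... = c" using x1(1) .
    finally show ?thesis .
  qed
  moreover have "c*y = x*c"
  proof -
    have "c*y = (c*x*c)*y" using x1 by simp
    also have "... = (x*c*c)*y" using x1(3) by simp
    also have "... = x*(c*(c*y))" by (simp add: mult.assoc)
    also have "c*(c*y) = c*y*c" by (metis y1(3) mult.assoc)
    also have "... = c" using y1(1) .
    finally show ?thesis .
  qed
  ultimately have e: "x*c = y*c" "c*x = c*y" using x1 y1 by auto
  have "x = x*(c*x)" using x1(2) by (simp add: mult.assoc)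
  also have "... = (x*c)*y" using e(2) by (simp add: mult.assoc)
  also have "... = y*c*y" using e(1) by simp
  also have "... = y" using y1(2) .
  finally show ?thesis .
qed

theorem corollary2p4:
  fixes a d :: "'a::ring_1"
  assumes "mary_invertible_along a d"
  defines "t \<equiv> group_inverse (a * d) * a"
  shows "idempotent (d * t) \<and> idempotent (1 - t * d) \<and>
         dw_invertible a (d * t) (1 - t * d)"
proof -
  obtain b z z' w w' where bab: "b*a*b = b" and bz: "b = d*z" and dz: "d = b*z'"
    and bw: "b = w*d" and dw: "d = w'*b"
    using assms unfolding mary_invertible_along_def right_ideal_eq_def left_ideal_eq_def by blast
  have bad: "b*a*d = d"
  proof -
    have "b*a*d = (b*a*b)*z'" using dz by (simp add: mult.assoc)
    thus ?thesis using bab dz by simp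
  qed
  have dab: "d*a*b = d"
  proof -
    have "d*a*b = w'*(b*a*b)" using dw by (simp add: mult.assoc)
    thus ?thesis using bab dw by simp
  qed
  have bzad: "b*z*a*d = b"
  proof -
    have "b*z*a*d = w*(d*z)*a*d" using bw by (simp add: mult.assoc)
    also have "... = w*d" using bz bad by (simp add: mult.assoc)
    finally show ?thesis using bw by simp
  qed
  define x where "x = a*b*z*a*b"
  have cx: "a*d*x = a*b"
  proof -
    have "a*d*x = a*(d*a*b)*z*a*b" unfolding x_def by (simp add: mult.assoc)
    also have "... = a*(d*z)*a*b" using dab by (simp add: mult.assoc)
    also have "... = a*(b*a*b)" using bz by (simp add: mult.assoc)
    finally show ?thesis using bab by simp
  qed
  have xc: "x*(a*d) = a*b"
  proof -
    have "x*(a*d) = a*b*z*a*(b*a*d)" unfolding x_def by (simp add: mult.assoc)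
    also have "... = a*(b*z*a*d)" using bad by (simp add: mult.assoc)
    finally have "x*(a*d) = a*(b*z*a*d)" .
    thus ?thesis using bzad by (simp add: mult.assoc)
  qed
  have abx: "a*b*x = x"
  proof -
    have "a*b*x = a*(b*a*b)*z*a*b" unfolding x_def by (simp add: mult.assoc)
    also have "... = a*b*z*a*b" using bab by simp
    finally show ?thesis unfolding x_def .
  qed
  have gi: "is_group_inverse (a*d) x"
    unfolding is_group_inverse_def
  proof (intro conjI)
    show "a*d*x*(a*d) = a*d" using cx bad by (simp add: mult.assoc)
    show "x*(a*d)*x = x" using xc abx by simp
    show "a*d*x = x*(a*d)" using cx xc by simp
  qed
  have "group_inverse (a*d) = x"
    unfolding group_inverse_def using gi gi_unique by blast
  hence t: "t = a*b*z*a*b*a" unfolding t_def x_def by (simp add: mult.assoc)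
  have dt: "d*t = b*a"
  proof -
    have "d*t = (d*a*b)*z*a*b*a" using t by (simp add: mult.assoc)
    also have "... = (d*z)*a*b*a" using dab by simp
    also have "... = (b*a*b)*a" using bz by (simp add: mult.assoc)
    finally show ?thesis using bab by simp
  qed
  have td: "t*d = a*b"
  proof -
    have "t*d = a*b*z*a*(b*a*d)" using t by (simp add: mult.assoc)
    also have "... = a*(b*z*a*d)" using bad by (simp add: mult.assoc)
    finally show ?thesis using bzad by simp
  qed
  have i1: "idempotent (b*a)" unfolding idempotent_def
  proof -
    have "b*a*(b*a) = (b*a*b)*a" by (simp add: mult.assoc)
    thus "b*a*(b*a) = b*a" using bab by simp
  qed
  have i2: "idempotent (1 - a*b)" unfolding idempotent_def
  proof -
    have "a*b*(a*b) = a*(b*a*b)" by (simp add: mult.assoc)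
    hence "a*b*(a*b) = a*b" using bab by simp
    thus "(1 - a*b)*(1 - a*b) = 1 - a*b" by (simp add: algebra_simps)
  qed
  show ?thesis unfolding dw_invertible_def dt td using i1 i2 bab by blast
qed

end
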